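(* Let $\Lambda=KQ/\langle I\rangle$ be a $1$-Gorenstein gentle algebra over an algebraically closed field $K$, with Cohen–Macaulay Auslander algebra $\Gamma=KQ^{Aus}/\langle I^{Aus}\rangle$ and functor $\Phi:\mathrm{mod}\,\Lambda\to\mathrm{mod}\,\Gamma$, $M\mapsto\widehat{M}$, as described in the context. Let $M$ be a Gorenstein projective $\Lambda$-module, $e$ a dimension vector for $Q$, and $U,N$ $\Lambda$-modules. Suppose that the stratum $\mathcal{S}_{[U]}$ of $\mathrm{Gr}_e(M)$ has non-empty intersection with the closure $\overline{\mathcal{S}_{[N]}}$. Then $\underline{\dim}\,\widehat{U}\leq\underline{\dim}\,\widehat{N}$ componentwise, as dimension vectors of representations of $\Gamma$.
   Context: Conventions: arrows $\alpha:s(\alpha)\to t(\alpha)$; paths composed right to left ($\beta\alpha$ means $\alpha$ then $\beta$). A gentle algebra is a finite dimensional $\Lambda=KQ/\langle I\rangle$ where $I$ is a set of length-$2$ paths such that: each vertex is the start of at most two and the end of at most two arrows; for each arrow $\alpha$ there is at most one arrow $\beta$ with $t(\beta)=s(\alpha)$, $\alpha\beta\notin I$, at most one $\gamma$ with $s(\gamma)=t(\alpha)$, $\gamma\alpha\notin I$, at most one $\beta$ with $t(\beta)=s(\alpha)$, $\alpha\beta\in I$, and at most one $\gamma$ with $s(\gamma)=t(\alpha)$, $\gamma\alpha\in I$. $\Lambda$ is $1$-Gorenstein if its injective dimension as a left and as a right module is at most $1$. Modules are finite dimensional left modules (representations of $(Q,I)$). A $\Lambda$-module $G$ is Gorenstein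 projective if there is an exact complex $\cdots\to P^{-1}\to P^0\xrightarrow{d^0}P^1\to\cdots$ of projective $\Lambda$-modules which remains exact under $\mathrm{Hom}_\Lambda(-,\Lambda)$ and with $G\cong\mathrm{Ker}\,d^0$. $\mathcal{C}(\Lambda)$ is the set of repetition-free cyclic paths $\alpha_1\cdots\alpha_n$ (up to cyclic permutation) with $\alpha_i\alpha_{i+1}\in I$ for all $i$ (indices mod $n$); $Q_1^{cyc}$ is the set of arrows on such cycles, $Q_1^{ncyc}=Q_1\setminus Q_1^{cyc}$. $Q^{Aus}$ has vertices $Q_0\sqcup Q_1^{cyc}$ and arrows $Q_1^{ncyc}\sqcup\{\alpha^+:s(\alpha)\to\alpha\}_{\alpha\in Q_1^{cyc}}\sqcup\{\alpha^-:\alpha\to t(\alpha)\}_{\alpha\in Q_1^{cyc}}$; $I^{Aus}=\{\beta^+\alpha^-\mid\beta\alpha\in I,\ \alpha,\beta\in Q_1^{cyc}\}\cup\{\beta\alpha\mid\beta\alpha\in I,\ \alpha,\beta\in Q_1^{ncyc}\}$; $\Gamma=KQ^{Aus}/\langle I^{Aus}\rangle$. $\Phi(M)=\widehat{M}$ has $\widehat{M}_i=M_i$ ($i\in Q_0$), $\widehat{M}_\alpha=\mathrm{Im}\,M_\alpha$ ($\alpha\in Q_1^{cyc}$), $\widehat{M}_\beta=M_\beta$ ($\beta\in Q_1^{ncyc}$), and $\widehat{M}_{\alpha^+}$, $\widehat{M}_{\alpha^-}$ the surjection $M_{s(\alpha)}\to\mathrm{Im}\,M_\alpha$ and inclusion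 $\mathrm{Im}\,M_\alpha\to M_{t(\alpha)}$ factoring $M_\alpha$. $\mathrm{Gr}_e(M)$ is the quiver Grassmannian (projective variety) of submodules of $M$ of dimension vector $e$; for a $\Lambda$-module $N$, $\mathcal{S}_{[N]}\subseteq\mathrm{Gr}_e(M)$ is the (locally closed, irreducible) subset of submodules isomorphic to $N$. *)

theory Defs
  imports Main "HOL-Library.Function_Algebras" "HOL-Library.Countable"
    "HOL-Computational_Algebra.Polynomial"
begin

definition alg_closed :: "'k::field itself \<Rightarrow> bool" where
  "alg_closed _ \<longleftrightarrow> (\<forall>p :: 'k poly. degree p > 0 \<longrightarrow> (\<exists>x. poly p x = 0))"

text \<open>All vector spaces are subspaces of the ambient space nat => k.\<close>
type_synonym 'k vec = "nat \<Rightarrow> 'k"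

definition sc :: "'k::field \<Rightarrow> 'k vec \<Rightarrow> 'k vec" where
  "sc c v = (\<lambda>n. c * v n)"

abbreviation subsp :: "'k::field vec set \<Rightarrow> bool" where "subsp \<equiv> module.subspace sc"
abbreviation spn :: "'k::field vec set \<Rightarrow> 'k vec set" where "spn \<equiv> module.span sc"
abbreviation vdim :: "'k::field vec set \<Rightarrow> nat" where "vdim \<equiv> vector_space.dim sc"

definition fin_dim_subsp :: "'k::field vec set \<Rightarrow> bool" where
  "fin_dim_subsp S \<longleftrightarrow> subsp S \<and> (\<exists>B. finite B \<and> B \<subseteq> S \<and> spn B = S)"

definition linear_on :: "'k::field vec set \<Rightarrow> ('k vec \<Rightarrow> 'k vec) \<Rightarrow> bool" where
  "linear_on S f \<longleftrightarrow> (\<forall>x\<in>S. \<forall>y\<in>S. f (x + y) = f x + f y) \<and> (\<forall>c. \<forall>x\<in>S. f (sc c x) = sc c (f x))"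

text \<open>A pair (b, a) in rels stands for the length-2 path b a (first a, then b).\<close>
record ('v, 'a) bquiver =
  vs :: "'v set"
  ars :: "'a set"
  src :: "'a \<Rightarrow> 'v"
  tgt :: "'a \<Rightarrow> 'v"
  rels :: "('a \<times> 'a) set"

definition bquiver_wf :: "('v, 'a) bquiver \<Rightarrow> bool" where
  "bquiver_wf Q \<longleftrightarrow> finite (vs Q) \<and> finite (ars Q) \<and>
     (\<forall>a\<in>ars Q. src Q a \<in> vs Q \<and> tgt Q a \<in> vs Q) \<and>
     rels Q \<subseteq> {(b, a). a \<in> ars Q \<and> b \<in> ars Q \<and> tgt Q a = src Q b}"

text \<open>Paths (i, p): p = [a_k, ..., a_1] is the path a_k ... a_1 starting at i; nonzero
  in KQ/<I> iff it contains no relation (I consists of paths of length 2).\<close>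
fun path_ok :: "('v, 'a) bquiver \<Rightarrow> 'v \<Rightarrow> 'a list \<Rightarrow> bool" where
  "path_ok Q i [] = (i \<in> vs Q)"
| "path_ok Q i [a] = (a \<in> ars Q \<and> src Q a = i)"
| "path_ok Q i (b # a # r) = (b \<in> ars Q \<and> src Q b = tgt Q a \<and> (b, a) \<notin> rels Q \<and> path_ok Q i (a # r))"

fun path_end :: "('v, 'a) bquiver \<Rightarrow> 'v \<Rightarrow> 'a list \<Rightarrow> 'v" where
  "path_end Q i [] = i"
| "path_end Q i (a # r) = tgt Q a"

definition opp :: "('v, 'a) bquiver \<Rightarrow> ('v, 'a) bquiver" where
  "opp Q = \<lparr>vs = vs Q, ars = ars Q, src = tgt Q, tgt = src Q, rels = {(a, b). (b, a) \<in> rels Q}\<rparr>"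

definition gentle :: "('v, 'a) bquiver \<Rightarrow> bool" where
  "gentle Q \<longleftrightarrow> bquiver_wf Q \<and>
     finite {(i, p). path_ok Q i p} \<and>
     (\<forall>v\<in>vs Q. card {a\<in>ars Q. src Q a = v} \<le> 2 \<and> card {a\<in>ars Q. tgt Q a = v} \<le> 2) \<and>
     (\<forall>a\<in>ars Q.
        card {b\<in>ars Q. tgt Q b = src Q a \<and> (a, b) \<notin> rels Q} \<le> 1 \<and>
        card {c\<in>ars Q. src Q c = tgt Q a \<and> (c, a) \<notin> rels Q} \<le> 1 \<and>
        card {b\<in>ars Q. tgt Q b = src Q a \<and> (a, b) \<in> rels Q} \<le> 1 \<and>
        card {c\<in>ars Q. src Q c = tgt Q a \<and> (c, a) \<in> rels Q} \<le> 1)"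

record ('v, 'a, 'k) rep =
  sp :: "'v \<Rightarrow> 'k vec set"
  mp :: "'a \<Rightarrow> 'k vec \<Rightarrow> 'k vec"

text \<open>Finite dimensional representations of (Q, I) = finite dimensional left KQ/<I>-modules.\<close>
definition is_rep :: "('v, 'a) bquiver \<Rightarrow> ('v, 'a, 'k::field) rep \<Rightarrow> bool" where
  "is_rep Q M \<longleftrightarrow>
     (\<forall>i\<in>vs Q. fin_dim_subsp (sp M i)) \<and> (\<forall>i. i \<notin> vs Q \<longrightarrow> sp M i = {0}) \<and>
     (\<forall>a\<in>ars Q. linear_on (sp M (src Q a)) (mp M a) \<and> mp M a ` sp M (src Q a) \<subseteq> sp M (tgt Q a)) \<and>
     (\<forall>(b, a)\<in>rels Q. \<forall>x\<in>sp M (src Q a). mp M b (mp M a x) = 0)"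

definition is_hom :: "('v, 'a) bquiver \<Rightarrow> ('v, 'a, 'k::field) rep \<Rightarrow> ('v, 'a, 'k) rep
    \<Rightarrow> ('v \<Rightarrow> 'k vec \<Rightarrow> 'k vec) \<Rightarrow> bool" where
  "is_hom Q M N h \<longleftrightarrow>
     (\<forall>i\<in>vs Q. linear_on (sp M i) (h i) \<and> h i ` sp M i \<subseteq> sp N i) \<and>
     (\<forall>a\<in>ars Q. \<forall>x\<in>sp M (src Q a). h (tgt Q a) (mp M a x) = mp N a (h (src Q a) x))"

definition hom_eq :: "('v, 'a) bquiver \<Rightarrow> ('v, 'a, 'k::field) rep
    \<Rightarrow> ('v \<Rightarrow> 'k vec \<Rightarrow> 'k vec) \<Rightarrow> ('v \<Rightarrow> 'k vec \<Rightarrow> 'k vec) \<Rightarrow> bool" where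
  "hom_eq Q M f g \<longleftrightarrow> (\<forall>i\<in>vs Q. \<forall>x\<in>sp M i. f i x = g i x)"

definition hcomp :: "('v \<Rightarrow> 'k vec \<Rightarrow> 'k vec) \<Rightarrow> ('v \<Rightarrow> 'k vec \<Rightarrow> 'k vec) \<Rightarrow> ('v \<Rightarrow> 'k vec \<Rightarrow> 'k vec)" where
  "hcomp g f = (\<lambda>i. g i \<circ> f i)"

definition is_iso :: "('v, 'a) bquiver \<Rightarrow> ('v, 'a, 'k::field) rep \<Rightarrow> ('v, 'a, 'k) rep
    \<Rightarrow> ('v \<Rightarrow> 'k vec \<Rightarrow> 'k vec) \<Rightarrow> bool" where
  "is_iso Q M N h \<longleftrightarrow> is_hom Q M N h \<and> (\<forall>i\<in>vs Q. bij_betw (h i) (sp M i) (sp N i))"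

definition isomorphic :: "('v, 'a) bquiver \<Rightarrow> ('v, 'a, 'k::field) rep \<Rightarrow> ('v, 'a, 'k) rep \<Rightarrow> bool" where
  "isomorphic Q M N \<longleftrightarrow> (\<exists>h. is_iso Q M N h)"

definition projective :: "('v, 'a) bquiver \<Rightarrow> ('v, 'a, 'k::field) rep \<Rightarrow> bool" where
  "projective Q P \<longleftrightarrow> is_rep Q P \<and>
     (\<forall>(M :: ('v, 'a, 'k) rep) N g f. is_rep Q M \<longrightarrow> is_rep Q N \<longrightarrow> is_hom Q M N g \<longrightarrow>
        (\<forall>i\<in>vs Q. g i ` sp M i = sp N i) \<longrightarrow> is_hom Q P N f \<longrightarrow>
        (\<exists>h. is_hom Q P M h \<and> hom_eq Q P (hcomp g h) f))"

definition injective :: "('v, 'a) bquiver \<Rightarrow> ('v, 'a, 'k::field) rep \<Rightarrow> bool" where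
  "injective Q J \<longleftrightarrow> is_rep Q J \<and>
     (\<forall>(M :: ('v, 'a, 'k) rep) N f g. is_rep Q M \<longrightarrow> is_rep Q N \<longrightarrow> is_hom Q M N f \<longrightarrow>
        (\<forall>i\<in>vs Q. inj_on (f i) (sp M i)) \<longrightarrow> is_hom Q M J g \<longrightarrow>
        (\<exists>h. is_hom Q N J h \<and> hom_eq Q M (hcomp h f) g))"

text \<open>The regular left module KQ/<I>, with basis the nonzero paths (i, p), p ending at the
  vertex; the arrow a acts by left multiplication p |-> a p.\<close>
definition delta :: "nat \<Rightarrow> 'k::field vec" where
  "delta n = (\<lambda>m. if m = n then 1 else 0)"

definition regular_rep :: "('v::countable, 'a::countable) bquiver \<Rightarrow> ('v, 'a, 'k::field) rep" where
  "regular_rep Q = \<lparr>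
     sp = (\<lambda>j. if j \<in> vs Q then spn {delta (to_nat (i, p)) | i p. path_ok Q i p \<and> path_end Q i p = j} else {0}),
     mp = (\<lambda>a v n. if n \<in> range (to_nat :: 'v \<times> 'a list \<Rightarrow> nat) then
             (case (from_nat n :: 'v \<times> 'a list) of (i, p) \<Rightarrow>
                if path_ok Q i p \<and> p \<noteq> [] \<and> hd p = a then v (to_nat (i, tl p)) else 0)
           else 0)\<rparr>"

text \<open>Injective dimension of the regular module at most 1: an injective coresolution
  0 -> Lambda -> I0 -> I1 -> 0.\<close>
definition injdim_regular_le1 :: "('v::countable, 'a::countable) bquiver \<Rightarrow> 'k::field itself \<Rightarrow> bool" where
  "injdim_regular_le1 Q _ \<longleftrightarrow>
     (\<exists>(J0 :: ('v, 'a, 'k) rep) J1 f g. injective Q J0 \<and> injective Q J1 \<and>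
        is_hom Q (regular_rep Q) J0 f \<and> is_hom Q J0 J1 g \<and>
        (\<forall>i\<in>vs Q. inj_on (f i) (sp (regular_rep Q) i)) \<and>
        (\<forall>i\<in>vs Q. f i ` sp (regular_rep Q) i = {x\<in>sp J0 i. g i x = 0}) \<and>
        (\<forall>i\<in>vs Q. g i ` sp J0 i = sp J1 i))"

text \<open>1-Gorenstein: injective dimension at most 1 as a left module and as a right module
  (right KQ/<I>-modules = left modules over the opposite bound quiver).\<close>
definition one_gorenstein :: "('v::countable, 'a::countable) bquiver \<Rightarrow> 'k::field itself \<Rightarrow> bool" where
  "one_gorenstein Q K \<longleftrightarrow> injdim_regular_le1 Q K \<and> injdim_regular_le1 (opp Q) K"

definition kernel_rep :: "('v, 'a, 'k::field) rep \<Rightarrow> ('v \<Rightarrow> 'k vec \<Rightarrow> 'k vec) \<Rightarrow> ('v, 'a, 'k) rep" where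
  "kernel_rep M f = \<lparr>sp = (\<lambda>i. {x\<in>sp M i. f i x = 0}), mp = mp M\<rparr>"

definition gorenstein_projective :: "('v::countable, 'a::countable) bquiver \<Rightarrow> ('v, 'a, 'k::field) rep \<Rightarrow> bool" where
  "gorenstein_projective Q G \<longleftrightarrow>
     (\<exists>(P :: int \<Rightarrow> ('v, 'a, 'k) rep) d.
        (\<forall>n. projective Q (P n)) \<and> (\<forall>n. is_hom Q (P n) (P (n + 1)) (d n)) \<and>
        (\<forall>n. \<forall>i\<in>vs Q. d (n - 1) i ` sp (P (n - 1)) i = {x\<in>sp (P n) i. d n i x = 0}) \<and>
        (\<forall>n \<phi>. is_hom Q (P n) (regular_rep Q) \<phi> \<longrightarrow>
            hom_eq Q (P (n - 1)) (hcomp \<phi> (d (n - 1))) (\<lambda>_ _. 0) \<longrightarrow>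
            (\<exists>\<psi>. is_hom Q (P (n + 1)) (regular_rep Q) \<psi> \<and> hom_eq Q (P n) \<phi> (hcomp \<psi> (d n)))) \<and>
        isomorphic Q G (kernel_rep (P 0) (d 0)))"

definition grass_pre :: "('v, 'a) bquiver \<Rightarrow> ('v, 'a, 'k::field) rep \<Rightarrow> ('v \<Rightarrow> nat) \<Rightarrow> ('v \<Rightarrow> 'k vec set) set" where
  "grass_pre Q M e = {L. (\<forall>i\<in>vs Q. subsp (L i) \<and> L i \<subseteq> sp M i \<and> vdim (L i) = e i) \<and>
                          (\<forall>i. i \<notin> vs Q \<longrightarrow> L i = {0})}"

definition Gr :: "('v, 'a) bquiver \<Rightarrow> ('v, 'a, 'k::field) rep \<Rightarrow> ('v \<Rightarrow> nat) \<Rightarrow> ('v \<Rightarrow> 'k vec set) set" where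
  "Gr Q M e = {L\<in>grass_pre Q M e. \<forall>a\<in>ars Q. mp M a ` L (src Q a) \<subseteq> L (tgt Q a)}"

definition stratum :: "('v, 'a) bquiver \<Rightarrow> ('v, 'a, 'k::field) rep \<Rightarrow> ('v \<Rightarrow> nat) \<Rightarrow> ('v, 'a, 'k) rep
    \<Rightarrow> ('v \<Rightarrow> 'k vec set) set" where
  "stratum Q M e N = {L\<in>Gr Q M e. isomorphic Q \<lparr>sp = L, mp = mp M\<rparr> N}"

inductive_set polyfun :: "(('c \<Rightarrow> 'k::field) \<Rightarrow> 'k) set" where
  pvar: "(\<lambda>x. x c) \<in> polyfun"
| pconst: "(\<lambda>x. a) \<in> polyfun"
| padd: "f \<in> polyfun \<Longrightarrow> g \<in> polyfun \<Longrightarrow> (\<lambda>x. f x + g x) \<in> polyfun"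
| pmult: "f \<in> polyfun \<Longrightarrow> g \<in> polyfun \<Longrightarrow> (\<lambda>x. f x * g x) \<in> polyfun"

definition basis_of :: "('v, 'a) bquiver \<Rightarrow> ('v, 'a, 'k::field) rep \<Rightarrow> 'v \<Rightarrow> nat \<Rightarrow> 'k vec" where
  "basis_of Q M = (SOME b. \<forall>i\<in>vs Q. inj_on (b i) {..<vdim (sp M i)} \<and>
      \<not> module.dependent sc (b i ` {..<vdim (sp M i)}) \<and> spn (b i ` {..<vdim (sp M i)}) = sp M i)"

text \<open>Coordinates C (i, r, c): r-th coordinate (w.r.t. the basis of M_i) of the c-th spanning
  vector of the subspace at vertex i; the subspaces spanned.\<close>
definition coord_sub :: "('v, 'a) bquiver \<Rightarrow> ('v, 'a, 'k::field) rep \<Rightarrow> ('v \<Rightarrow> nat)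
    \<Rightarrow> ('v \<times> nat \<times> nat \<Rightarrow> 'k) \<Rightarrow> 'v \<Rightarrow> 'k vec set" where
  "coord_sub Q M e C i = (if i \<in> vs Q then
      spn {(\<Sum>r<vdim (sp M i). sc (C (i, r, c)) (basis_of Q M i r)) | c. c < e i} else {0})"

text \<open>The (open) Stiefel-type set of coordinate tuples of full rank; it maps onto the
  product of Grassmannians grass_pre.\<close>
definition stiefel :: "('v, 'a) bquiver \<Rightarrow> ('v, 'a, 'k::field) rep \<Rightarrow> ('v \<Rightarrow> nat)
    \<Rightarrow> ('v \<times> nat \<times> nat \<Rightarrow> 'k) set" where
  "stiefel Q M e = {C. (\<forall>i r c. (i \<notin> vs Q \<or> r \<ge> vdim (sp M i) \<or> c \<ge> e i) \<longrightarrow> C (i, r, c) = 0) \<and>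
                       (\<forall>i\<in>vs Q. vdim (coord_sub Q M e C i) = e i)}"

text \<open>Zariski-closed subsets of the product of Grassmannians: those whose preimage in the
  Stiefel set is (relatively) Zariski closed.\<close>
definition zclosed :: "('v, 'a) bquiver \<Rightarrow> ('v, 'a, 'k::field) rep \<Rightarrow> ('v \<Rightarrow> nat)
    \<Rightarrow> ('v \<Rightarrow> 'k vec set) set \<Rightarrow> bool" where
  "zclosed Q M e A \<longleftrightarrow> A \<subseteq> grass_pre Q M e \<and>
     (\<exists>F \<subseteq> polyfun. {C\<in>stiefel Q M e. coord_sub Q M e C \<in> A} = {C\<in>stiefel Q M e. \<forall>f\<in>F. f C = 0})"

definition gr_closure :: "('v, 'a) bquiver \<Rightarrow> ('v, 'a, 'k::field) rep \<Rightarrow> ('v \<Rightarrow> nat)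
    \<Rightarrow> ('v \<Rightarrow> 'k vec set) set \<Rightarrow> ('v \<Rightarrow> 'k vec set) set" where
  "gr_closure Q M e S = \<Inter>{A. zclosed Q M e A \<and> S \<subseteq> A} \<inter> Gr Q M e"

definition cyc_arrows :: "('v, 'a) bquiver \<Rightarrow> 'a set" where
  "cyc_arrows Q = {a. \<exists>cs. cs \<noteq> [] \<and> distinct cs \<and> set cs \<subseteq> ars Q \<and> a \<in> set cs \<and>
       (\<forall>k<length cs. (cs ! k, cs ! ((k + 1) mod length cs)) \<in> rels Q)}"

text \<open>Arrows of Q^Aus: Inl b (b non-cyclic), Inr (Inl a) = a^+, Inr (Inr a) = a^-.
  Vertices: Inl i (i in Q_0), Inr a (a cyclic).\<close>
definition aus :: "('v, 'a) bquiver \<Rightarrow> ('v + 'a, 'a + 'a + 'a) bquiver" where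
  "aus Q = \<lparr>
     vs = Inl ` vs Q \<union> Inr ` cyc_arrows Q,
     ars = Inl ` (ars Q - cyc_arrows Q) \<union> (Inr \<circ> Inl) ` cyc_arrows Q \<union> (Inr \<circ> Inr) ` cyc_arrows Q,
     src = (\<lambda>x. case x of Inl b \<Rightarrow> Inl (src Q b) | Inr (Inl a) \<Rightarrow> Inl (src Q a) | Inr (Inr a) \<Rightarrow> Inr a),
     tgt = (\<lambda>x. case x of Inl b \<Rightarrow> Inl (tgt Q b) | Inr (Inl a) \<Rightarrow> Inr a | Inr (Inr a) \<Rightarrow> Inl (tgt Q a)),
     rels = {(Inr (Inl b), Inr (Inr a)) | a b. (b, a) \<in> rels Q \<and> a \<in> cyc_arrows Q \<and> b \<in> cyc_arrows Q}
          \<union> {(Inl b, Inl a) | a b. (b, a) \<in> rels Q \<and> a \<notin> cyc_arrows Q \<and> b \<notin> cyc_arrows Q}\<rparr>"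

definition Phi :: "('v, 'a) bquiver \<Rightarrow> ('v, 'a, 'k::field) rep \<Rightarrow> ('v + 'a, 'a + 'a + 'a, 'k) rep" where
  "Phi Q M = \<lparr>
     sp = (\<lambda>x. case x of Inl i \<Rightarrow> sp M i
              | Inr a \<Rightarrow> (if a \<in> cyc_arrows Q then mp M a ` sp M (src Q a) else {0})),
     mp = (\<lambda>x. case x of Inl b \<Rightarrow> mp M b | Inr (Inl a) \<Rightarrow> mp M a | Inr (Inr a) \<Rightarrow> id)\<rparr>"

definition dimvec :: "('v, 'a, 'k::field) rep \<Rightarrow> 'v \<Rightarrow> nat" where
  "dimvec R = (\<lambda>x. vdim (sp R x))"

end

theory Submission
  imports Defs "Jordan_Normal_Form.Determinant"
begin

lemma vs_sc: "Vector_Spaces.vector_space (sc :: 'k::field \<Rightarrow> (nat \<Rightarrow> 'k) \<Rightarrow> _)"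
  by unfold_locales (auto simp: sc_def fun_eq_iff algebra_simps)

interpretation V: Vector_Spaces.vector_space "sc :: 'k::field \<Rightarrow> (nat \<Rightarrow> 'k) \<Rightarrow> _"
  by (rule vs_sc)

lemma sum_fun_apply: "(sum f A) (n::nat) = (\<Sum>x\<in>A. f x n)"
  for f :: "'b \<Rightarrow> nat \<Rightarrow> 'k::field"
  by (induction A rule: infinite_finite_induct) auto

lemma sc_apply[simp]: "sc c v n = c * v n"
  by (simp add: sc_def)

lemma linear_on_0:
  assumes "subsp S" "linear_on S f"
  shows "f 0 = 0"
proof -
  have "0 \<in> S" using assms(1) V.subspace_0 by blast
  then have "f (sc 0 0) = sc 0 (f 0)" using assms(2) unfolding linear_on_def by blast
  then show ?thesis by (simp add: sc_def fun_eq_iff zero_fun_def)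
qed

lemma linear_on_sum:
  assumes S: "subsp S" and f: "linear_on S f" and T: "finite T" and g: "\<And>x. x\<in>T \<Longrightarrow> g x \<in> S"
  shows "f (\<Sum>x\<in>T. sc (c x) (g x)) = (\<Sum>x\<in>T. sc (c x) (f (g x)))"
  using T g
proof (induction T rule: finite_induct)
  case empty
  then show ?case using linear_on_0[OF S f] by (simp add: zero_fun_def)
next
  case (insert x F)
  have gx: "g x \<in> S" using insert by auto
  have sF: "(\<Sum>x\<in>F. sc (c x) (g x)) \<in> S"
    using insert S by (intro V.subspace_sum V.subspace_scale) auto
  have scx: "sc (c x) (g x) \<in> S" using gx S V.subspace_scale by blast
  have "f (\<Sum>x\<in>insert x F. sc (c x) (g x)) = f (sc (c x) (g x) + (\<Sum>x\<in>F. sc (c x) (g x)))"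
    using insert by simp
  also have "\<dots> = f (sc (c x) (g x)) + f (\<Sum>x\<in>F. sc (c x) (g x))"
    using f sF scx unfolding linear_on_def by blast
  also have "f (sc (c x) (g x)) = sc (c x) (f (g x))"
    using f gx unfolding linear_on_def by blast
  finally show ?case using insert by simp
qed

lemma linear_on_image_subspace:
  assumes S: "subsp S" and f: "linear_on S f" and W: "subsp W" "W \<subseteq> S"
  shows "subsp (f ` W)"
proof (rule V.subspaceI)
  show "0 \<in> f ` W" using linear_on_0[OF S f] V.subspace_0[OF W(1)] by force
next
  fix x y assume "x \<in> f ` W" "y \<in> f ` W"
  then obtain a b where ab: "a \<in> W" "b \<in> W" "x = f a" "y = f b" by auto
  then have "f (a + b) = x + y" using f W ab unfolding linear_on_def by blast
  moreover have "a + b \<in> W" using ab W V.subspace_add by blast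
  ultimately show "x + y \<in> f ` W" by force
next
  fix c x assume "x \<in> f ` W"
  then obtain a where a: "a \<in> W" "x = f a" by auto
  then have "f (sc c a) = sc c x" using f W a unfolding linear_on_def by blast
  moreover have "sc c a \<in> W" using a W V.subspace_scale by blast
  ultimately show "sc c x \<in> f ` W" by force
qed

lemma linear_on_span_image:
  assumes S: "subsp S" and f: "linear_on S f" and T: "T \<subseteq> S"
  shows "f ` spn T = spn (f ` T)"
proof
  have spS: "spn T \<subseteq> S" using V.span_minimal[OF T S] .
  have lin: "linear_on (spn T) f" using f spS unfolding linear_on_def
    by (meson V.span_add V.span_scale subsetD)
  show "spn (f ` T) \<subseteq> f ` spn T"
    by (rule V.span_minimal) (auto intro: linear_on_image_subspace[OF V.subspace_span lin] V.span_base
        simp: V.subspace_span)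
  show "f ` spn T \<subseteq> spn (f ` T)"
  proof
    fix y assume "y \<in> f ` spn T"
    then obtain x where x: "x \<in> spn T" "y = f x" by auto
    have "subsp {x. x \<in> S \<and> f x \<in> spn (f ` T)}"
    proof (rule V.subspaceI)
      show "0 \<in> {x. x \<in> S \<and> f x \<in> spn (f ` T)}"
        using linear_on_0[OF S f] V.subspace_0[OF S] V.span_zero by auto
    next
      fix a b assume "a \<in> {x. x \<in> S \<and> f x \<in> spn (f ` T)}" "b \<in> {x. x \<in> S \<and> f x \<in> spn (f ` T)}"
      then show "a + b \<in> {x. x \<in> S \<and> f x \<in> spn (f ` T)}"
        using f S unfolding linear_on_def by (auto intro: V.span_add V.subspace_add)
    next
      fix c a assume "a \<in> {x. x \<in> S \<and> f x \<in> spn (f ` T)}"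
      then show "sc c a \<in> {x. x \<in> S \<and> f x \<in> spn (f ` T)}"
        using f S unfolding linear_on_def by (auto intro: V.span_scale V.subspace_scale)
    qed
    then have "x \<in> S \<and> f x \<in> spn (f ` T)"
      using V.span_induct[OF x(1), of "\<lambda>x. x \<in> S \<and> f x \<in> spn (f ` T)"] T
      by (auto intro: V.span_base)
    then show "y \<in> spn (f ` T)" using x by simp
  qed
qed

lemma linear_on_indep_image:
  assumes S: "subsp S" and f: "linear_on S f" and inj: "inj_on f S" and B: "B \<subseteq> S"
    and ind: "V.independent B"
  shows "V.independent (f ` B)"
  unfolding V.independent_explicit_module
proof (intro allI impI)
  fix t u v assume t: "finite t" "t \<subseteq> f ` B" and s: "(\<Sum>v\<in>t. sc (u v) v) = 0" and v: "v \<in> t"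
  obtain t' where t': "t' \<subseteq> B" "inj_on f t'" "t = f ` t'" using t(2) subset_image_inj by metis
  have ft': "finite t'" using t t' finite_image_iff by metis
  have "(\<Sum>x\<in>t'. sc (u (f x)) (f x)) = 0" using s t' by (simp add: sum.reindex)
  then have "f (\<Sum>x\<in>t'. sc (u (f x)) x) = 0"
    using linear_on_sum[OF S f ft', of id "\<lambda>x. u (f x)"] t' B by auto
  moreover have "(\<Sum>x\<in>t'. sc (u (f x)) x) \<in> S"
    using t' B S by (intro V.subspace_sum V.subspace_scale) auto
  moreover have "f 0 = 0" "(0::nat\<Rightarrow>'a) \<in> S" using linear_on_0[OF S f] V.subspace_0[OF S] by auto
  ultimately have z: "(\<Sum>x\<in>t'. sc (u (f x)) x) = 0" using inj_onD[OF inj] by force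
  obtain x where x: "x \<in> t'" "v = f x" using v t' by auto
  have "(\<lambda>x. u (f x)) x = 0"
    using ind[unfolded V.independent_explicit_module, rule_format, of t' "\<lambda>x. u (f x)" x] ft' t'(1) z x(1)
    by blast
  then show "u v = 0" using x by simp
qed

lemma dim_inj_image:
  assumes S: "subsp S" and f: "linear_on S f" and inj: "inj_on f S" and W: "subsp W" "W \<subseteq> S"
    and B0: "finite B0" "W \<subseteq> spn B0"
  shows "vdim (f ` W) = vdim W"
proof -
  obtain B where B: "B \<subseteq> W" "V.independent B" "W \<subseteq> spn B" "card B = vdim W"
    using V.basis_exists by blast
  have finB: "finite B" using V.independent_span_bound[OF B0(1) B(2)] B(1) B0(2) by auto
  have spB: "spn B = W" using V.span_subspace[OF B(1) B(3) W(1)] .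
  have "f ` W = spn (f ` B)" using linear_on_span_image[OF S f] B(1) W(2) spB by auto
  moreover have "V.independent (f ` B)" using linear_on_indep_image[OF S f inj] B W by auto
  moreover have "card (f ` B) = card B" using inj B W by (meson card_image inj_on_subset subset_trans)
  ultimately show ?thesis using V.dim_span_eq_card_independent B by metis
qed

lemma dep_comb:
  fixes u :: "nat \<Rightarrow> nat \<Rightarrow> 'k::field"
  assumes fin: "finite X" and dimle: "vdim (spn X) \<le> R" and uX: "\<forall>q<Suc R. u q \<in> X"
  shows "\<exists>x. (\<exists>q<Suc R. x q \<noteq> 0) \<and> (\<forall>n. (\<Sum>q<Suc R. x q * u q n) = 0)"
proof (cases "inj_on u {..<Suc R}")
  case False
  then obtain q1 q2 where q: "q1<Suc R" "q2<Suc R" "q1\<noteq>q2" "u q1 = u q2" by (auto simp: inj_on_def)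
  define x where "x q = (if q = q1 then 1 else if q = q2 then -1 else (0::'k))" for q
  have "(\<Sum>q<Suc R. x q * u q n) = 0" for n
  proof -
    have "(\<Sum>q<Suc R. x q * u q n) = (\<Sum>q\<in>{q1,q2}. x q * u q n)"
      by (rule sum.mono_neutral_right) (use q in \<open>auto simp: x_def\<close>)
    also have "\<dots> = 0" using q by (simp add: x_def)
    finally show ?thesis .
  qed
  moreover have "x q1 \<noteq> 0" by (simp add: x_def)
  ultimately show ?thesis using q by blast
next
  case True
  let ?U = "u ` {..<Suc R}"
  have cardU: "card ?U = Suc R" using card_image[OF True] by simp
  have "V.dependent ?U"
  proof (rule ccontr)
    assume ind: "V.independent ?U"
    obtain B where B: "B \<subseteq> spn X" "V.independent B" "spn X \<subseteq> spn B" "card B = vdim (spn X)"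
      using V.basis_exists by blast
    have finB: "finite B" using V.independent_span_bound[OF fin B(2) B(1)] by simp
    have "?U \<subseteq> spn B" using uX B(3) V.span_base by blast
    then have "card ?U \<le> card B" using V.independent_span_bound[OF finB ind] by simp
    then show False using cardU B(4) dimle by simp
  qed
  then obtain t c where t: "finite t" "t \<subseteq> ?U" "(\<Sum>v\<in>t. sc (c v) v) = 0" and v0: "\<exists>v\<in>t. c v \<noteq> 0"
    unfolding V.dependent_explicit by blast
  define x where "x q = (if u q \<in> t then c (u q) else 0)" for q
  have "(\<Sum>q<Suc R. x q * u q n) = 0" for n
  proof -
    have "(\<Sum>q<Suc R. x q * u q n) = (\<Sum>q\<in>{q\<in>{..<Suc R}. u q \<in> t}. c (u q) * u q n)"
      by (subst sum.inter_filter) (auto simp: x_def intro!: sum.cong)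
    also have "\<dots> = (\<Sum>v\<in>u ` {q\<in>{..<Suc R}. u q \<in> t}. c v * v n)"
      by (rule sum.reindex[symmetric, unfolded comp_def]) (rule inj_on_subset[OF True], auto)
    also have "u ` {q\<in>{..<Suc R}. u q \<in> t} = t" using t(2) by auto
    also have "(\<Sum>v\<in>t. c v * v n) = (\<Sum>v\<in>t. sc (c v) v) n" by (simp add: sum_fun_apply)
    also have "\<dots> = 0" using t(3) by simp
    finally show ?thesis .
  qed
  moreover obtain q0 where "q0 < Suc R" "x q0 \<noteq> 0" using v0 t(2) by (auto simp: x_def)
  ultimately show ?thesis by blast
qed

lemma det_zero_of_dep:
  fixes u :: "nat \<Rightarrow> nat \<Rightarrow> 'k::field"
  assumes fin: "finite X" and dimle: "vdim (spn X) \<le> R" and uX: "\<forall>q<Suc R. u q \<in> X"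
  shows "det (mat (Suc R) (Suc R) (\<lambda>(p,q). u q (ns p))) = 0"
proof -
  obtain x where x: "\<exists>q<Suc R. x q \<noteq> 0" "\<forall>n. (\<Sum>q<Suc R. x q * u q n) = 0"
    using dep_comb[OF assms] by blast
  let ?A = "mat (Suc R) (Suc R) (\<lambda>(p,q). u q (ns p))"
  let ?v = "vec (Suc R) x"
  have "?v \<noteq> 0\<^sub>v (Suc R)" using x(1) by (auto simp: vec_eq_iff)
  moreover have "?A *\<^sub>v ?v = 0\<^sub>v (Suc R)"
  proof (rule eq_vecI)
    fix p assume p: "p < dim_vec (0\<^sub>v (Suc R) :: 'k Matrix.vec)"
    have "(?A *\<^sub>v ?v) $ p = (\<Sum>q\<in>{0..<Suc R}. u q (ns p) * x q)"
      using p by (simp add: scalar_prod_def)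
    also have "\<dots> = (\<Sum>q<Suc R. x q * u q (ns p))" by (simp add: atLeast0LessThan mult.commute)
    also have "\<dots> = 0" using x(2) by simp
    finally show "(?A *\<^sub>v ?v) $ p = 0\<^sub>v (Suc R) $ p" using p by simp
  qed simp
  moreover have "?v \<in> carrier_vec (Suc R)" by simp
  ultimately show ?thesis
    using det_0_iff_vec_prod_zero[of ?A "Suc R"] mat_carrier[of "Suc R" "Suc R"] by blast
qed

lemma det_mat_0: "det (mat 0 0 f) = (1::'a::comm_ring_1)"
proof -
  have "mat 0 0 f = (1\<^sub>m 0 :: 'a mat)" by (rule eq_matI) simp_all
  then show ?thesis using det_one by simp
qed

lemma row_select:
  fixes u :: "nat \<Rightarrow> nat \<Rightarrow> 'k::field"
  shows "inj_on u {..<K} \<Longrightarrow> V.independent (u ` {..<K}) \<Longrightarrow>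
    \<exists>ns. det (mat K K (\<lambda>(p,q). u q (ns p))) \<noteq> 0"
proof (induction K)
  case 0
  then show ?case using det_mat_0 by simp
next
  case (Suc K)
  have "inj_on u {..<K}" using Suc.prems(1) by (rule inj_on_subset) auto
  moreover have "V.independent (u ` {..<K})"
    using Suc.prems(2) by (rule V.independent_mono) auto
  ultimately obtain ns' where B: "det (mat K K (\<lambda>(p,q). u q (ns' p))) \<noteq> 0"
    using Suc.IH by blast
  show ?case
  proof (rule ccontr)
    assume "\<not> ?case"
    then have all0: "det (mat (Suc K) (Suc K) (\<lambda>(p,q). u q (ns p))) = 0" for ns by blast
    define A where "A n = mat (Suc K) (Suc K) (\<lambda>(p,q). u q ((ns'(K:=n)) p))" for n
    define \<gamma> where "\<gamma> q = cofactor (A 0) K q" for q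
    have del: "mat_delete (A n) K q = mat_delete (A 0) K q" for n q
      by (rule eq_matI) (auto simp: mat_delete_def A_def)
    have delK: "mat_delete (A 0) K K = mat K K (\<lambda>(p,q). u q (ns' p))"
      by (rule eq_matI) (auto simp: mat_delete_def A_def)
    have gK: "\<gamma> K = det (mat K K (\<lambda>(p,q). u q (ns' p)))"
      unfolding \<gamma>_def cofactor_def delK by (simp flip: mult_2)
    have lin: "(\<Sum>q<Suc K. \<gamma> q * u q n) = 0" for n
    proof -
      have "A n \<in> carrier_mat (Suc K) (Suc K)" by (simp add: A_def)
      from laplace_expansion_row[OF this, of K]
      have "det (A n) = (\<Sum>j<Suc K. A n $$ (K,j) * cofactor (A n) K j)" by simp
      also have "\<dots> = (\<Sum>j<Suc K. \<gamma> j * u j n)"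
      proof (rule sum.cong)
        fix j assume "j \<in> {..<Suc K}"
        then have "A n $$ (K,j) = u j n" by (simp add: A_def)
        then show "A n $$ (K,j) * cofactor (A n) K j = \<gamma> j * u j n"
          unfolding \<gamma>_def cofactor_def del[of n j] by simp
      qed simp
      finally show ?thesis using all0[of "ns'(K:=n)"] by (simp add: A_def)
    qed
    let ?U = "u ` {..<Suc K}"
    define c where "c v = \<gamma> (the_inv_into {..<Suc K} u v)" for v
    have "(\<Sum>v\<in>?U. sc (c v) v) = (\<Sum>q<Suc K. sc (\<gamma> q) (u q))"
      by (subst sum.reindex[OF Suc.prems(1)]) (auto simp: c_def the_inv_into_f_f[OF Suc.prems(1)])
    also have "\<dots> = 0" using lin by (simp add: fun_eq_iff sum_fun_apply)
    finally have "V.dependent ?U"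
      unfolding V.dependent_explicit
      using B gK by (intro exI[of _ ?U] exI[of _ c])
        (auto simp: c_def the_inv_into_f_f[OF Suc.prems(1)] intro!: bexI[of _ K])
    then show False using Suc.prems(2) by blast
  qed
qed

lemma rank_minors:
  fixes w :: "nat \<Rightarrow> nat \<Rightarrow> 'k::field"
  shows "vdim (spn (w ` {..<m})) \<le> R \<longleftrightarrow>
    (\<forall>cs ns. (\<forall>q<Suc R. cs q < m) \<longrightarrow> det (mat (Suc R) (Suc R) (\<lambda>(p,q). w (cs q) (ns p))) = 0)"
proof
  assume "vdim (spn (w ` {..<m})) \<le> R"
  then show "\<forall>cs ns. (\<forall>q<Suc R. cs q < m) \<longrightarrow> det (mat (Suc R) (Suc R) (\<lambda>(p,q). w (cs q) (ns p))) = 0"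
    using det_zero_of_dep[of "w ` {..<m}" R "\<lambda>q. w (cs q)" for cs] by auto
next
  assume H: "\<forall>cs ns. (\<forall>q<Suc R. cs q < m) \<longrightarrow> det (mat (Suc R) (Suc R) (\<lambda>(p,q). w (cs q) (ns p))) = 0"
  show "vdim (spn (w ` {..<m})) \<le> R"
  proof (rule ccontr)
    assume gt: "\<not> ?thesis"
    let ?X = "w ` {..<m}"
    obtain B where B: "B \<subseteq> ?X" "V.independent B" "?X \<subseteq> spn B"
      using V.maximal_independent_subset by blast
    have "spn B = spn ?X"
      using B by (meson V.span_minimal V.span_mono V.subspace_span subset_antisym)
    then have cB: "card B = vdim (spn ?X)" using V.dim_span_eq_card_independent[OF B(2)] by simp
    have finB: "finite B" using B(1) finite_subset by blast
    obtain B' where B': "B' \<subseteq> B" "card B' = Suc R" using cB gt obtain_subset_with_card_n[of "Suc R" B]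
      by force
    have finB': "finite B'" using B' finB finite_subset by blast
    obtain g where g: "bij_betw g {0..<Suc R} B'" using ex_bij_betw_nat_finite[OF finB'] B' by auto
    define cs where "cs q = (SOME c. c < m \<and> w c = g q)" for q
    have cs: "cs q < m \<and> w (cs q) = g q" if "q < Suc R" for q
    proof -
      have "g q \<in> ?X" using g that B B' bij_betw_apply by fastforce
      then have "\<exists>c. c < m \<and> w c = g q" by auto
      then show ?thesis unfolding cs_def by (rule someI_ex)
    qed
    let ?u = "\<lambda>q. w (cs q)"
    have eqg: "?u q = g q" if "q < Suc R" for q using cs that by simp
    have inj: "inj_on ?u {..<Suc R}"
      using bij_betw_imp_inj_on[OF g] eqg by (simp add: inj_on_def atLeast0LessThan)
    have img: "?u ` {..<Suc R} = B'"
      using bij_betw_imp_surj_on[OF g] eqg by (auto simp: atLeast0LessThan image_iff)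
    have "V.independent (?u ` {..<Suc R})" using img B' B(2) V.independent_mono by metis
    then obtain ns where "det (mat (Suc R) (Suc R) (\<lambda>(p,q). ?u q (ns p))) \<noteq> 0"
      using row_select[OF inj] by blast
    then show False using H cs by auto
  qed
qed

lemma polyfun_sum: "(\<forall>x\<in>A. f x \<in> polyfun) \<Longrightarrow> (\<lambda>C. \<Sum>x\<in>A. f x C) \<in> polyfun"
  by (induction A rule: infinite_finite_induct) (auto intro: polyfun.intros)

lemma polyfun_prod: "(\<forall>x\<in>A. f x \<in> polyfun) \<Longrightarrow> (\<lambda>C. \<Prod>x\<in>A. f x C) \<in> polyfun"
  by (induction A rule: infinite_finite_induct) (auto intro: polyfun.intros)

lemma polyfun_det:
  fixes g :: "('c \<Rightarrow> 'k::field) \<Rightarrow> nat \<Rightarrow> nat \<Rightarrow> 'k"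
  assumes "\<forall>i j. (\<lambda>C. g C i j) \<in> polyfun"
  shows "(\<lambda>C. det (mat n n (\<lambda>(i,j). g C i j))) \<in> polyfun"
proof -
  have eq: "det (mat n n (\<lambda>(i,j). g C i j)) =
     (\<Sum>p\<in>{p. p permutes {0..<n}}. signof p * (\<Prod>i\<in>{0..<n}. g C i (p i)))" for C
  proof -
    have "det (mat n n (\<lambda>(i,j). g C i j)) =
     (\<Sum>p\<in>{p. p permutes {0..<n}}. signof p * (\<Prod>i\<in>{0..<n}. mat n n (\<lambda>(i,j). g C i j) $$ (i, p i)))"
      by (rule det_def') simp
    also have "\<dots> = (\<Sum>p\<in>{p. p permutes {0..<n}}. signof p * (\<Prod>i\<in>{0..<n}. g C i (p i)))"
    proof (rule sum.cong[OF refl], rule arg_cong[where f = "\<lambda>x. _ * x"], rule prod.cong[OF refl])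
      fix p i assume p: "p \<in> {p. p permutes {0..<n}}" and i: "i \<in> {0..<n}"
      then have "p i < n" by (simp add: permutes_in_image)
      then show "mat n n (\<lambda>(i,j). g C i j) $$ (i, p i) = g C i (p i)" using i by simp
    qed
    finally show ?thesis .
  qed
  have "(\<lambda>C. \<Sum>p\<in>{p. p permutes {0..<n}}. signof p * (\<Prod>i\<in>{0..<n}. g C i (p i))) \<in> polyfun"
    by (rule polyfun_sum) (auto intro!: polyfun.pmult[OF polyfun.pconst] polyfun_prod[unfolded Ball_def] simp: assms)
  then show ?thesis unfolding eq .
qed

lemma basis_of_prop:
  assumes M: "is_rep Q M" and i: "i \<in> vs Q"
  shows "inj_on (basis_of Q M i) {..<vdim (sp M i)} \<and>
      \<not> module.dependent sc (basis_of Q M i ` {..<vdim (sp M i)}) \<and>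
      spn (basis_of Q M i ` {..<vdim (sp M i)}) = sp M i"
proof -
  have ex: "\<forall>i\<in>vs Q. \<exists>bi. inj_on bi {..<vdim (sp M i)} \<and>
      \<not> module.dependent sc (bi ` {..<vdim (sp M i)}) \<and> spn (bi ` {..<vdim (sp M i)}) = sp M i"
  proof
    fix i assume i: "i \<in> vs Q"
    then have fd: "fin_dim_subsp (sp M i)" using M unfolding is_rep_def by blast
    then obtain B0 where B0: "finite B0" "B0 \<subseteq> sp M i" "spn B0 = sp M i" and S: "subsp (sp M i)"
      unfolding fin_dim_subsp_def by blast
    obtain B where B: "B \<subseteq> sp M i" "V.independent B" "sp M i \<subseteq> spn B" "card B = vdim (sp M i)"
      using V.basis_exists by blast
    have finB: "finite B" using V.independent_span_bound[OF B0(1) B(2)] B(1) B0(3) by auto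
    obtain h where h: "bij_betw h {0..<card B} B" using ex_bij_betw_nat_finite[OF finB] by blast
    have "spn B = sp M i" using V.span_subspace[OF B(1) B(3) S] .
    then show "\<exists>bi. inj_on bi {..<vdim (sp M i)} \<and>
      \<not> module.dependent sc (bi ` {..<vdim (sp M i)}) \<and> spn (bi ` {..<vdim (sp M i)}) = sp M i"
      using h B by (intro exI[of _ h]) (auto simp: bij_betw_def atLeast0LessThan)
  qed
  then have "\<exists>b. \<forall>i\<in>vs Q. inj_on (b i) {..<vdim (sp M i)} \<and>
      \<not> module.dependent sc (b i ` {..<vdim (sp M i)}) \<and> spn (b i ` {..<vdim (sp M i)}) = sp M i"
    by (rule bchoice)
  then have "\<forall>i\<in>vs Q. inj_on (basis_of Q M i) {..<vdim (sp M i)} \<and>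
      \<not> module.dependent sc (basis_of Q M i ` {..<vdim (sp M i)}) \<and> spn (basis_of Q M i ` {..<vdim (sp M i)}) = sp M i"
    unfolding basis_of_def by (rule someI_ex)
  then show ?thesis using i by blast
qed

lemma basis_of_in:
  assumes M: "is_rep Q M" and i: "i \<in> vs Q" and r: "r < vdim (sp M i)"
  shows "basis_of Q M i r \<in> sp M i"
proof -
  have "basis_of Q M i r \<in> spn (basis_of Q M i ` {..<vdim (sp M i)})"
    using r by (intro V.span_base) auto
  then show ?thesis using basis_of_prop[OF M i] by simp
qed

definition vv :: "('v, 'a) bquiver \<Rightarrow> ('v, 'a, 'k::field) rep \<Rightarrow> ('v \<times> nat \<times> nat \<Rightarrow> 'k) \<Rightarrow> 'v \<Rightarrow> nat \<Rightarrow> nat \<Rightarrow> 'k" where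
  "vv Q M C i c = (\<Sum>r<vdim (sp M i). sc (C (i, r, c)) (basis_of Q M i r))"

lemma coord_sub_vv: "i \<in> vs Q \<Longrightarrow> coord_sub Q M e C i = spn (vv Q M C i ` {..<e i})"
  unfolding coord_sub_def vv_def by (simp, intro arg_cong[where f=spn]) auto

lemma vv_in:
  assumes M: "is_rep Q M" and i: "i \<in> vs Q"
  shows "vv Q M C i c \<in> sp M i"
proof -
  have S: "subsp (sp M i)" using M i unfolding is_rep_def fin_dim_subsp_def by blast
  show ?thesis unfolding vv_def
    using basis_of_in[OF M i] S by (intro V.subspace_sum V.subspace_scale) auto
qed

lemma coord_sub_grass:
  assumes M: "is_rep Q M" and C: "C \<in> stiefel Q M e"
  shows "coord_sub Q M e C \<in> grass_pre Q M e"
  unfolding grass_pre_def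
proof (intro CollectI conjI ballI allI impI)
  fix i assume i: "i \<in> vs Q"
  have S: "subsp (sp M i)" using M i unfolding is_rep_def fin_dim_subsp_def by blast
  show "subsp (coord_sub Q M e C i)" unfolding coord_sub_vv[OF i] by (rule V.subspace_span)
  show "coord_sub Q M e C i \<subseteq> sp M i" unfolding coord_sub_vv[OF i]
    by (rule V.span_minimal[OF _ S]) (use vv_in[OF M i] in auto)
  show "vdim (coord_sub Q M e C i) = e i" using C i unfolding stiefel_def by blast
next
  fix i assume "i \<notin> vs Q"
  then show "coord_sub Q M e C i = {0}" unfolding coord_sub_def by simp
qed

lemma rep_fd:
  assumes M: "is_rep Q M" and i: "i \<in> vs Q"
  obtains B0 where "finite B0" "spn B0 = sp M i" "subsp (sp M i)"
  using M i unfolding is_rep_def fin_dim_subsp_def by blast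

lemma iso_dims:
  assumes wf: "bquiver_wf Q" and M: "is_rep Q M" and L: "L \<in> Gr Q M e" and iso: "isomorphic Q \<lparr>sp = L, mp = mp M\<rparr> X"
  shows "\<forall>i\<in>vs Q. vdim (sp X i) = e i"
    and "\<forall>a\<in>ars Q. vdim (mp X a ` sp X (src Q a)) = vdim (mp M a ` L (src Q a))"
proof -
  obtain h where hom: "is_hom Q \<lparr>sp = L, mp = mp M\<rparr> X h"
    and bij: "\<forall>i\<in>vs Q. bij_betw (h i) (L i) (sp X i)"
    using iso unfolding isomorphic_def Defs.is_iso_def by auto
  have Lg: "\<forall>i\<in>vs Q. subsp (L i) \<and> L i \<subseteq> sp M i \<and> vdim (L i) = e i"
    using L unfolding Gr_def grass_pre_def by blast
  have Lm: "\<forall>a\<in>ars Q. mp M a ` L (src Q a) \<subseteq> L (tgt Q a)" using L unfolding Gr_def by blast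
  have hl: "\<forall>i\<in>vs Q. linear_on (L i) (h i)" using hom unfolding is_hom_def by simp
  have hc: "\<forall>a\<in>ars Q. \<forall>x\<in>L (src Q a). h (tgt Q a) (mp M a x) = mp X a (h (src Q a) x)"
    using hom unfolding is_hom_def by simp
  have st: "\<forall>a\<in>ars Q. src Q a \<in> vs Q \<and> tgt Q a \<in> vs Q" using wf unfolding bquiver_wf_def by blast
  have ml: "\<forall>a\<in>ars Q. linear_on (sp M (src Q a)) (mp M a)" using M unfolding is_rep_def by simp
  show "\<forall>i\<in>vs Q. vdim (sp X i) = e i"
  proof
    fix i assume i: "i \<in> vs Q"
    obtain B0 where B0: "finite B0" "spn B0 = sp M i" using rep_fd[OF M i] by blast
    have "vdim (h i ` L i) = vdim (L i)"
      using dim_inj_image[of "L i" "h i" "L i" B0] Lg hl bij i B0 by (auto simp: bij_betw_def)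
    moreover have "h i ` L i = sp X i" using bij i by (simp add: bij_betw_def)
    ultimately show "vdim (sp X i) = e i" using Lg i by simp
  qed
  show "\<forall>a\<in>ars Q. vdim (mp X a ` sp X (src Q a)) = vdim (mp M a ` L (src Q a))"
  proof
    fix a assume a: "a \<in> ars Q"
    let ?s = "src Q a" and ?t = "tgt Q a"
    have s: "?s \<in> vs Q" and t: "?t \<in> vs Q" using st a by auto
    obtain B0 where B0: "finite B0" "spn B0 = sp M ?t" using rep_fd[OF M t] by blast
    obtain B1 where B1: "subsp (sp M ?s)" using rep_fd[OF M s] by blast
    let ?W = "mp M a ` L ?s"
    have Wsub: "subsp ?W"
      using linear_on_image_subspace[OF B1, of "mp M a" "L ?s"] ml a Lg s by auto
    have WL: "?W \<subseteq> L ?t" using Lm a by auto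
    have "?W \<subseteq> spn B0" using WL Lg t B0 by auto
    then have "vdim (h ?t ` ?W) = vdim ?W"
      using dim_inj_image[of "L ?t" "h ?t" ?W B0] Lg hl bij t B0 Wsub WL by (auto simp: bij_betw_def)
    moreover have "h ?t ` ?W = mp X a ` sp X ?s"
    proof -
      have "h ?t ` ?W = mp X a ` (h ?s ` L ?s)" using hc a by (force simp: image_image)
      also have "h ?s ` L ?s = sp X ?s" using bij s by (simp add: bij_betw_def)
      finally show ?thesis .
    qed
    ultimately show "vdim (mp X a ` sp X ?s) = vdim ?W" by simp
  qed
qed

lemma closure_empty: "gr_closure Q M e {} = {}"
proof -
  have "zclosed Q M e {}"
    unfolding zclosed_def by (intro conjI exI[of _ "{\<lambda>_. 1}"]) (auto intro: polyfun.pconst)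
  then show ?thesis unfolding gr_closure_def by blast
qed

lemma rank_closed:
  fixes M :: "('v, 'a, 'k::field) rep"
  assumes wf: "bquiver_wf Q" and M: "is_rep Q M" and a: "a \<in> ars Q"
  shows "zclosed Q M e {L \<in> grass_pre Q M e. vdim (mp M a ` L (src Q a)) \<le> R}"
proof -
  let ?i = "src Q a"
  let ?A = "{L \<in> grass_pre Q M e. vdim (mp M a ` L ?i) \<le> R}"
  have i: "?i \<in> vs Q" using wf a unfolding bquiver_wf_def by blast
  have S: "subsp (sp M ?i)" using rep_fd[OF M i] by blast
  have ml: "linear_on (sp M ?i) (mp M a)" using M a unfolding is_rep_def by simp
  define WC where "WC C c n = (\<Sum>r<vdim (sp M ?i). C (?i, r, c) * mp M a (basis_of Q M ?i r) n)"
    for C :: "'v \<times> nat \<times> nat \<Rightarrow> 'k" and c n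
  define F where "F = {(\<lambda>C. det (mat (Suc R) (Suc R) (\<lambda>(p,q). WC C (cs q) (ns p)))) | cs ns.
      \<forall>q<Suc R. cs q < e ?i}"
  have Fp: "F \<subseteq> polyfun"
  proof
    fix f assume "f \<in> F"
    then obtain cs ns where f: "f = (\<lambda>C. det (mat (Suc R) (Suc R) (\<lambda>(p,q). WC C (cs q) (ns p))))"
      unfolding F_def by blast
    have "\<forall>p q. (\<lambda>C. WC C (cs q) (ns p)) \<in> polyfun"
    proof (intro allI)
      fix p q
      have "\<forall>r\<in>{..<vdim (sp M ?i)}. (\<lambda>C. C (?i, r, cs q) * mp M a (basis_of Q M ?i r) (ns p)) \<in> polyfun"
        by (intro ballI polyfun.pmult[OF polyfun.pvar polyfun.pconst])
      from polyfun_sum[OF this] show "(\<lambda>C. WC C (cs q) (ns p)) \<in> polyfun" unfolding WC_def .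
    qed
    then show "f \<in> polyfun" using polyfun_det[of "\<lambda>C p q. WC C (cs q) (ns p)" "Suc R"] f by simp
  qed
  have key: "coord_sub Q M e C \<in> ?A \<longleftrightarrow> (\<forall>f\<in>F. f C = 0)" if C: "C \<in> stiefel Q M e" for C
  proof -
    have WCeq: "mp M a (vv Q M C ?i c) = WC C c" for c
    proof -
      have "mp M a (vv Q M C ?i c) =
          (\<Sum>r<vdim (sp M ?i). sc (C (?i, r, c)) (mp M a (basis_of Q M ?i r)))"
        unfolding vv_def
        by (rule linear_on_sum[OF S ml]) (auto intro: basis_of_in[OF M i])
      then show ?thesis by (simp add: fun_eq_iff sum_fun_apply WC_def)
    qed
    have img: "mp M a ` coord_sub Q M e C ?i = spn (WC C ` {..<e ?i})"
    proof -
      have "mp M a ` coord_sub Q M e C ?i = spn (mp M a ` vv Q M C ?i ` {..<e ?i})"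
        unfolding coord_sub_vv[OF i]
        by (rule linear_on_span_image[OF S ml]) (auto intro: vv_in[OF M i])
      also have "mp M a ` vv Q M C ?i ` {..<e ?i} = WC C ` {..<e ?i}"
        by (auto simp: image_image WCeq)
      finally show ?thesis .
    qed
    have "coord_sub Q M e C \<in> ?A \<longleftrightarrow> vdim (spn (WC C ` {..<e ?i})) \<le> R"
      using coord_sub_grass[OF M C] img by simp
    also have "\<dots> \<longleftrightarrow> (\<forall>cs ns. (\<forall>q<Suc R. cs q < e ?i) \<longrightarrow>
        det (mat (Suc R) (Suc R) (\<lambda>(p,q). WC C (cs q) (ns p))) = 0)"
      by (rule rank_minors)
    also have "\<dots> \<longleftrightarrow> (\<forall>f\<in>F. f C = 0)"
    proof
      assume H: "\<forall>cs ns. (\<forall>q<Suc R. cs q < e ?i) \<longrightarrow>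
        det (mat (Suc R) (Suc R) (\<lambda>(p,q). WC C (cs q) (ns p))) = 0"
      show "\<forall>f\<in>F. f C = 0"
      proof
        fix f assume "f \<in> F"
        then obtain cs ns where "f = (\<lambda>C. det (mat (Suc R) (Suc R) (\<lambda>(p,q). WC C (cs q) (ns p))))"
          "\<forall>q<Suc R. cs q < e ?i"
          unfolding F_def by blast
        then show "f C = 0" using H by simp
      qed
    next
      assume H: "\<forall>f\<in>F. f C = 0"
      show "\<forall>cs ns. (\<forall>q<Suc R. cs q < e ?i) \<longrightarrow>
        det (mat (Suc R) (Suc R) (\<lambda>(p,q). WC C (cs q) (ns p))) = 0"
      proof (intro allI impI)
        fix cs ns assume cs: "\<forall>q<Suc R. cs q < e ?i"
        have "(\<lambda>C. det (mat (Suc R) (Suc R) (\<lambda>(p,q). WC C (cs q) (ns p)))) \<in> F"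
          unfolding F_def using cs by blast
        from H[rule_format, OF this]
        show "det (mat (Suc R) (Suc R) (\<lambda>(p,q). WC C (cs q) (ns p))) = 0" by simp
      qed
    qed
    finally show ?thesis .
  qed
  show ?thesis
    unfolding zclosed_def
  proof (intro conjI exI[of _ F])
    show "?A \<subseteq> grass_pre Q M e" by blast
    show "F \<subseteq> polyfun" by (rule Fp)
    show "{C \<in> stiefel Q M e. coord_sub Q M e C \<in> ?A} = {C \<in> stiefel Q M e. \<forall>f\<in>F. f C = 0}"
      using key by blast
  qed
qed

theorem proposition4p3:
  fixes Q :: "('v::countable, 'a::countable) bquiver"
    and M U N :: "('v, 'a, 'k::field) rep"
    and e :: "'v \<Rightarrow> nat"
  assumes "alg_closed TYPE('k)"
    and "gentle Q"
    and "one_gorenstein Q TYPE('k)"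
    and "is_rep Q M" and "gorenstein_projective Q M"
    and "is_rep Q U" and "is_rep Q N"
    and "stratum Q M e U \<inter> gr_closure Q M e (stratum Q M e N) \<noteq> {}"
  shows "\<forall>x\<in>vs (aus Q). dimvec (Phi Q U) x \<le> dimvec (Phi Q N) x"
proof -
  have wf: "bquiver_wf Q" using assms(2) unfolding gentle_def by blast
  obtain L0 where L0U: "L0 \<in> stratum Q M e U" and L0c: "L0 \<in> gr_closure Q M e (stratum Q M e N)"
    using assms(8) by blast
  have L0Gr: "L0 \<in> Gr Q M e" and isoU: "isomorphic Q \<lparr>sp = L0, mp = mp M\<rparr> U"
    using L0U unfolding stratum_def by auto
  have "stratum Q M e N \<noteq> {}" using L0c closure_empty by fastforce
  then obtain L1 where L1: "L1 \<in> stratum Q M e N" by blast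
  have L1Gr: "L1 \<in> Gr Q M e" and isoN: "isomorphic Q \<lparr>sp = L1, mp = mp M\<rparr> N"
    using L1 unfolding stratum_def by auto
  note dU = iso_dims[OF wf assms(4) L0Gr isoU]
  note dN = iso_dims[OF wf assms(4) L1Gr isoN]
  show ?thesis
  proof
    fix x assume x: "x \<in> vs (aus Q)"
    then consider (v) i where "x = Inl i" "i \<in> vs Q" | (c) a where "x = Inr a" "a \<in> cyc_arrows Q"
      by (auto simp: aus_def)
    then show "dimvec (Phi Q U) x \<le> dimvec (Phi Q N) x"
    proof cases
      case v
      then show ?thesis using dU(1) dN(1) by (simp add: dimvec_def Phi_def)
    next
      case c
      have a: "a \<in> ars Q" using c(2) unfolding cyc_arrows_def by blast
      define R where "R = vdim (mp N a ` sp N (src Q a))"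
      have RU: "dimvec (Phi Q U) x = vdim (mp M a ` L0 (src Q a))"
        using dU(2) a c by (simp add: dimvec_def Phi_def)
      have RN: "dimvec (Phi Q N) x = R" using c by (simp add: dimvec_def Phi_def R_def)
      let ?A = "{L \<in> grass_pre Q M e. vdim (mp M a ` L (src Q a)) \<le> R}"
      have cl: "zclosed Q M e ?A" by (rule rank_closed[OF wf assms(4) a])
      have sub: "stratum Q M e N \<subseteq> ?A"
      proof
        fix L assume L: "L \<in> stratum Q M e N"
        then have LGr: "L \<in> Gr Q M e" and isoL: "isomorphic Q \<lparr>sp = L, mp = mp M\<rparr> N"
          unfolding stratum_def by auto
        have "vdim (mp N a ` sp N (src Q a)) = vdim (mp M a ` L (src Q a))"
          using iso_dims(2)[OF wf assms(4) LGr isoL] a by blast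
        then show "L \<in> ?A" using LGr unfolding Gr_def R_def by simp
      qed
      have "L0 \<in> ?A" using L0c cl sub unfolding gr_closure_def by blast
      then show ?thesis using RU RN by simp
    qed
  qed
qed

end
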